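(* For an integer $p\ge1$ let $F_p(s)=-\sum_{j=1}^\infty\ln(1-e^{j^ps})$ for $s<0$. Then for every pair of integers $p\ge1$ and $m\ge0$, $$F_p^{(m)}(-s)\sim\frac1p\,\zeta(1+1/p)\,\Gamma(m+1/p)\,\frac{1}{s^{m+1/p}},\quad\text{as } s\downarrow0.$$
   Context: $F_p$ is the fulcrum $s\mapsto\ln G_p(e^s)$ of $G_p(z)=\prod_{j\ge1}(1-z^{j^p})^{-1}$, the generating function of partitions into $p$-th powers. $F_p^{(m)}$ denotes the $m$-th derivative ($F_p^{(0)}=F_p$). $\alpha(s)\sim\beta(s)$ means $\alpha(s)/\beta(s)\to1$. $\zeta$ is the Riemann zeta function and $\Gamma$ the Gamma function. *)

theory Defs
  imports "HOL-Analysis.Analysis" "HOL-Library.Landau_Symbols"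
begin

definition zeta_real :: "real \<Rightarrow> real" where
  "zeta_real x = (\<Sum>n. 1 / (real (Suc n)) powr x)"

definition fulcrum :: "nat \<Rightarrow> real \<Rightarrow> real" where
  "fulcrum p s = - (\<Sum>j. ln (1 - exp (real (Suc j) ^ p * s)))"

end

theory Submission
  imports Defs "HOL-Real_Asymp.Real_Asymp"
begin


lemma summable_powr_exp:
  assumes "b < 0"
  shows "summable (\<lambda>k. real (Suc k) powr r * exp (real (Suc k) * b))"
proof (rule summable_comparison_test_ev)
  have lim: "((\<lambda>k::nat. real (Suc k) powr r * exp (real (Suc k) * b / 2)) \<longlongrightarrow> 0) at_top"
    using assms by real_asymp
  then have ev: "eventually (\<lambda>k. real (Suc k) powr r * exp (real (Suc k) * b / 2) < 1) at_top"
    by (rule order_tendstoD) simp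
  show "eventually (\<lambda>k. norm (real (Suc k) powr r * exp (real (Suc k) * b)) \<le> exp (b/2) ^ Suc k) sequentially"
  proof (rule eventually_mono[OF ev])
    fix k assume k: "real (Suc k) powr r * exp (real (Suc k) * b / 2) < 1"
    have e: "exp (real (Suc k) * b) = exp (real (Suc k) * b / 2) * exp (real (Suc k) * b / 2)"
      by (metis exp_add field_sum_of_halves)
    have "norm (real (Suc k) powr r * exp (real (Suc k) * b))
        = (real (Suc k) powr r * exp (real (Suc k) * b / 2)) * exp (real (Suc k) * b / 2)"
      using e by (simp del: of_nat_Suc)
    also have "\<dots> \<le> 1 * exp (real (Suc k) * b / 2)"
      using k by (intro mult_right_mono) auto
    also have "\<dots> = exp (real (Suc k) * (b/2))" by simp
    also have "\<dots> = exp (b/2) ^ Suc k" by (rule exp_of_nat_mult)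
    finally show "norm (real (Suc k) powr r * exp (real (Suc k) * b)) \<le> exp (b/2) ^ Suc k" .
  qed
  show "summable (\<lambda>k. exp (b/2) ^ Suc k)"
    using assms by (simp add: summable_geometric)
qed

definition psi :: "nat \<Rightarrow> real \<Rightarrow> real" where
  "psi m u = (\<Sum>k. real (Suc k) powr (real m - 1) * exp (real (Suc k) * u))"

lemma psi_summable:
  assumes "u < 0"
  shows "summable (\<lambda>k. real (Suc k) powr (real m - 1) * exp (real (Suc k) * u))"
  by (rule summable_powr_exp[OF assms])

lemma psi_nonneg: "u < 0 \<Longrightarrow> 0 \<le> psi m u"
  unfolding psi_def by (intro suminf_nonneg psi_summable) auto

lemma psi_le:
  assumes "v \<le> b" "b < 0"
  shows "psi n v \<le> exp (v - b) * psi n b"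
proof -
  have "psi n v \<le> (\<Sum>k. exp (v - b) * (real (Suc k) powr (real n - 1) * exp (real (Suc k) * b)))"
    unfolding psi_def
  proof (rule suminf_le)
    fix k
    have "real (Suc k) * (v - b) \<le> 1 * (v - b)"
      using assms by (intro mult_right_mono_neg) auto
    then have "exp (real (Suc k) * v) \<le> exp (v - b) * exp (real (Suc k) * b)"
      by (simp add: algebra_simps flip: exp_add)
    then show "real (Suc k) powr (real n - 1) * exp (real (Suc k) * v)
        \<le> exp (v - b) * (real (Suc k) powr (real n - 1) * exp (real (Suc k) * b))"
      by (simp add: mult.left_commute)
  next
    show "summable (\<lambda>k. real (Suc k) powr (real n - 1) * exp (real (Suc k) * v))"
      using assms by (intro psi_summable) auto
    show "summable (\<lambda>k. exp (v - b) * (real (Suc k) powr (real n - 1) * exp (real (Suc k) * b)))"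
      using assms by (intro summable_mult psi_summable) auto
  qed
  also have "\<dots> = exp (v - b) * psi n b"
    unfolding psi_def by (rule suminf_mult) (rule psi_summable[OF assms(2)])
  finally show ?thesis .
qed

lemma psi_deriv:
  assumes "u < 0"
  shows "(psi m has_real_derivative psi (Suc m) u) (at u)"
proof -
  define b where "b = u / 2"
  have ub: "u < b" "b < 0" using assms by (auto simp: b_def)
  define f where "f k x = real (Suc k) powr (real m - 1) * exp (real (Suc k) * x)" for k x
  define f' where "f' k x = real (Suc k) powr (real (Suc m) - 1) * exp (real (Suc k) * x)" for k x
  have "((\<lambda>x. \<Sum>k. f k x) has_field_derivative (\<Sum>k. f' k u)) (at u)"
  proof (rule has_field_derivative_series'(2)[where S="{..b}" and f=f and f'=f' and x0=u and x=u])
    show "convex {..b}" by simp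
    fix k x assume "x \<in> {..b}"
    have pw: "real (Suc k) powr (real m - 1) * real (Suc k) = real (Suc k) powr (real (Suc m) - 1)"
    proof -
      have "real (Suc k) powr (real (Suc m) - 1) = real (Suc k) powr ((real m - 1) + 1)" by simp
      also have "\<dots> = real (Suc k) powr (real m - 1) * real (Suc k) powr 1" by (rule powr_add)
      finally show ?thesis by simp
    qed
    have D: "(f k has_field_derivative real (Suc k) powr (real m - 1) * (exp (real (Suc k) * x) * real (Suc k))) (at x)"
      unfolding f_def by (auto intro!: derivative_eq_intros)
    have eq: "real (Suc k) powr (real m - 1) * (exp (real (Suc k) * x) * real (Suc k)) = f' k x"
      unfolding f'_def pw[symmetric] by (simp only: mult_ac)
    show "(f k has_field_derivative f' k x) (at x within {..b})"
      using D eq has_field_derivative_at_within by metis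
  next
    show "uniformly_convergent_on {..b} (\<lambda>n x. \<Sum>i<n. f' i x)"
    proof (rule Weierstrass_m_test')
      fix n x assume "x \<in> {..b}"
      then show "norm (f' n x) \<le> real (Suc n) powr (real (Suc m) - 1) * exp (real (Suc n) * b)"
        unfolding f'_def by (auto intro!: mult_left_mono)
    qed (rule summable_powr_exp[OF ub(2)])
  next
    show "u \<in> {..b}" using ub by simp
    show "summable (\<lambda>n. f n u)" unfolding f_def by (rule psi_summable[OF assms])
    show "u \<in> interior {..b}" using ub by simp
  qed
  moreover have "(\<lambda>x. \<Sum>k. f k x) = psi m" by (auto simp: f_def psi_def fun_eq_iff)
  moreover have "(\<Sum>k. f' k u) = psi (Suc m) u" by (simp add: f'_def psi_def)
  ultimately show ?thesis by simp
qed

lemma psi_zero: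
  assumes "u < 0"
  shows "psi 0 u = - ln (1 - exp u)"
proof -
  have "\<bar>- exp u\<bar> < 1" using assms by simp
  from ln_series'[OF this] have "(\<lambda>n. - (exp u ^ n) / of_nat n) sums ln (1 + - exp u)" by simp
  then have "(\<lambda>n. - (exp u ^ Suc n) / of_nat (Suc n)) sums ln (1 - exp u)"
    by (subst sums_Suc_iff) simp
  then have "(\<lambda>n. - (- (exp u ^ Suc n) / of_nat (Suc n))) sums (- ln (1 - exp u))"
    by (rule sums_minus)
  moreover have "(\<lambda>n. - (- (exp u ^ Suc n) / of_nat (Suc n))) =
      (\<lambda>k. real (Suc k) powr (real 0 - 1) * exp (real (Suc k) * u))"
  proof
    fix n
    have "exp u ^ Suc n = exp (real (Suc n) * u)" by (rule exp_of_nat_mult[symmetric])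
    moreover have "real (Suc n) powr (real 0 - 1) = 1 / real (Suc n)"
      by (simp add: powr_minus_divide del: of_nat_Suc)
    ultimately show "- (- (exp u ^ Suc n) / of_nat (Suc n)) = real (Suc n) powr (real 0 - 1) * exp (real (Suc n) * u)"
      by simp
  qed
  ultimately show ?thesis unfolding psi_def by (simp add: sums_iff)
qed

definition Phi :: "nat \<Rightarrow> nat \<Rightarrow> real \<Rightarrow> real" where
  "Phi p m t = (\<Sum>j. (real (Suc j) ^ p) ^ m * psi m (real (Suc j) ^ p * t))"

lemma Phi_term_bound:
  assumes "p \<ge> 1" "x \<le> b" "b < 0"
  shows "0 \<le> (real (Suc j) ^ p) ^ n * psi n (real (Suc j) ^ p * x)"
    and "(real (Suc j) ^ p) ^ n * psi n (real (Suc j) ^ p * x)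
           \<le> real (Suc j) powr (real (p*n)) * exp (real (Suc j) * b) * (exp (-b) * psi n b)"
proof -
  define A where "A = real (Suc j) ^ p"
  have A1: "real (Suc j) \<le> A"
    using power_increasing[of 1 p "real (Suc j)"] assms(1) by (simp add: A_def)
  hence A0: "1 \<le> A" by simp
  have "(A - 1) * x \<le> 0" using A0 assms by (intro mult_nonneg_nonpos) auto
  hence "A * x \<le> x" by (simp add: left_diff_distrib)
  hence Ax: "A * x \<le> b" using assms by linarith
  hence Axn: "A * x < 0" using assms by simp
  show "0 \<le> (real (Suc j) ^ p) ^ n * psi n (real (Suc j) ^ p * x)"
    using Axn psi_nonneg[OF Axn] A0 by (simp add: A_def)
  have "A * x \<le> A * b" using A0 assms by (intro mult_left_mono) auto
  also have "A * b \<le> real (Suc j) * b" using A1 assms by (intro mult_right_mono_neg) auto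
  finally have "exp (A * x - b) \<le> exp (real (Suc j) * b - b)" by simp
  hence "exp (A * x - b) * psi n b \<le> exp (real (Suc j) * b - b) * psi n b"
    using psi_nonneg[OF assms(3)] by (intro mult_right_mono) auto
  with psi_le[OF Ax assms(3), of n] have "psi n (A * x) \<le> exp (real (Suc j) * b - b) * psi n b"
    by linarith
  hence P: "A ^ n * psi n (A * x) \<le> A ^ n * (exp (real (Suc j) * b - b) * psi n b)"
    using A0 by (intro mult_left_mono) auto
  have E1: "A ^ n = real (Suc j) powr (real (p*n))"
  proof -
    have "A ^ n = real (Suc j) ^ (p*n)"
      by (simp add: A_def power_mult del: of_nat_Suc)
    also have "\<dots> = real (Suc j) powr (real (p*n))"
      by (rule powr_realpow[symmetric]) simp
    finally show ?thesis .
  qed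
  have E2: "exp (real (Suc j) * b - b) = exp (real (Suc j) * b) * exp (-b)"
    by (subst diff_conv_add_uminus, rule exp_add)
  have "A ^ n * psi n (A * x) \<le> real (Suc j) powr (real (p*n)) * (exp (real (Suc j) * b) * exp (-b) * psi n b)"
    using P unfolding E1 E2 .
  then show "(real (Suc j) ^ p) ^ n * psi n (real (Suc j) ^ p * x)
           \<le> real (Suc j) powr (real (p*n)) * exp (real (Suc j) * b) * (exp (-b) * psi n b)"
    by (simp only: A_def mult.assoc)
qed

lemma Phi_summable:
  assumes "p \<ge> 1" "t < 0"
  shows "summable (\<lambda>j. (real (Suc j) ^ p) ^ m * psi m (real (Suc j) ^ p * t))"
proof (rule summable_comparison_test)
  show "\<exists>N. \<forall>n\<ge>N. norm ((real (Suc n) ^ p) ^ m * psi m (real (Suc n) ^ p * t))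
     \<le> real (Suc n) powr (real (p*m)) * exp (real (Suc n) * t) * (exp (-t) * psi m t)"
    using Phi_term_bound[OF assms(1) order_refl assms(2)] by auto
  show "summable (\<lambda>n. real (Suc n) powr (real (p*m)) * exp (real (Suc n) * t) * (exp (-t) * psi m t))"
    by (intro summable_mult2 summable_powr_exp assms)
qed

lemma Phi_nonneg:
  assumes "p \<ge> 1" "t < 0"
  shows "0 \<le> Phi p m t"
  unfolding Phi_def
  by (intro suminf_nonneg Phi_summable assms Phi_term_bound[OF assms(1) order_refl assms(2)])

lemma Phi_deriv:
  assumes "p \<ge> 1" "t < 0"
  shows "(Phi p m has_real_derivative Phi p (Suc m) t) (at t)"
proof -
  define b where "b = t / 2"
  have tb: "t < b" "b < 0" using assms by (auto simp: b_def)
  define f where "f j x = (real (Suc j) ^ p) ^ m * psi m (real (Suc j) ^ p * x)" for j x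
  define f' where "f' j x = (real (Suc j) ^ p) ^ Suc m * psi (Suc m) (real (Suc j) ^ p * x)" for j x
  have "((\<lambda>x. \<Sum>j. f j x) has_field_derivative (\<Sum>j. f' j t)) (at t)"
  proof (rule has_field_derivative_series'(2)[where S="{..b}" and f=f and f'=f' and x0=t and x=t])
    show "convex {..b}" by simp
    fix j x assume x: "x \<in> {..b}"
    define A where "A = real (Suc j) ^ p"
    have A0: "1 \<le> A" unfolding A_def by simp
    have "(A - 1) * x \<le> 0" using A0 x tb by (intro mult_nonneg_nonpos) auto
    hence "A * x \<le> x" by (simp add: left_diff_distrib)
    moreover have "x \<le> b" using x by simp
    ultimately have Axn: "A * x < 0" using tb by linarith
    have D: "((\<lambda>x. psi m (A * x)) has_real_derivative psi (Suc m) (A * x) * A) (at x)"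
    proof -
      have Dg: "((\<lambda>x. A * x) has_real_derivative A) (at x)" by (auto intro!: derivative_eq_intros)
      show ?thesis by (rule DERIV_chain2[where f="psi m" and g="\<lambda>x. A*x", OF psi_deriv[OF Axn] Dg])
    qed
    have D2: "(f j has_real_derivative A ^ m * (psi (Suc m) (A * x) * A)) (at x)"
      unfolding f_def A_def[symmetric] by (rule DERIV_cmult[OF D])
    have eq: "A ^ m * (psi (Suc m) (A * x) * A) = f' j x"
      unfolding f'_def A_def[symmetric] by (simp add: mult_ac)
    show "(f j has_field_derivative f' j x) (at x within {..b})"
      using D2 eq has_field_derivative_at_within by metis
  next
    show "uniformly_convergent_on {..b} (\<lambda>n x. \<Sum>i<n. f' i x)"
    proof (rule Weierstrass_m_test')
      fix n x assume "x \<in> {..b}"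
      then show "norm (f' n x) \<le> real (Suc n) powr (real (p * Suc m)) * exp (real (Suc n) * b) * (exp (-b) * psi (Suc m) b)"
        unfolding f'_def using Phi_term_bound[OF assms(1) _ tb(2), of x n "Suc m"] by auto
    qed (intro summable_mult2 summable_powr_exp tb)
  next
    show "t \<in> {..b}" using tb by simp
    show "summable (\<lambda>n. f n t)" unfolding f_def by (rule Phi_summable[OF assms])
    show "t \<in> interior {..b}" using tb by simp
  qed
  moreover have "(\<lambda>x. \<Sum>j. f j x) = Phi p m" by (auto simp: f_def Phi_def fun_eq_iff)
  moreover have "(\<Sum>j. f' j t) = Phi p (Suc m) t" by (simp add: f'_def Phi_def)
  ultimately show ?thesis by simp
qed

lemma fulcrum_eq_Phi:
  assumes "p \<ge> 1" "t < 0"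
  shows "fulcrum p t = Phi p 0 t"
proof -
  have "Phi p 0 t = (\<Sum>j. - ln (1 - exp (real (Suc j) ^ p * t)))"
    unfolding Phi_def
  proof (intro suminf_cong)
    fix j
    have "real (Suc j) ^ p * t < 0" using assms by (simp add: mult_pos_neg)
    then show "(real (Suc j) ^ p) ^ 0 * psi 0 (real (Suc j) ^ p * t) = - ln (1 - exp (real (Suc j) ^ p * t))"
      by (simp add: psi_zero)
  qed
  also have "\<dots> = - (\<Sum>j. ln (1 - exp (real (Suc j) ^ p * t)))"
  proof (rule suminf_minus)
    have "summable (\<lambda>j. (real (Suc j) ^ p) ^ 0 * psi 0 (real (Suc j) ^ p * t))"
      by (rule Phi_summable[OF assms])
    moreover have "\<And>j. (real (Suc j) ^ p) ^ 0 * psi 0 (real (Suc j) ^ p * t) = - ln (1 - exp (real (Suc j) ^ p * t))"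
      using assms by (simp add: psi_zero mult_pos_neg)
    ultimately have "summable (\<lambda>j. - ln (1 - exp (real (Suc j) ^ p * t)))" by simp
    then show "summable (\<lambda>j. ln (1 - exp (real (Suc j) ^ p * t)))"
      using summable_minus_iff by blast
  qed
  finally show ?thesis by (simp add: fulcrum_def)
qed

lemma deriv_fulcrum:
  assumes "p \<ge> 1"
  shows "t < 0 \<Longrightarrow> (deriv ^^ m) (fulcrum p) t = Phi p m t"
proof (induction m arbitrary: t)
  case 0
  then show ?case using fulcrum_eq_Phi[OF assms] by simp
next
  case (Suc m)
  have "(deriv ^^ Suc m) (fulcrum p) t = deriv ((deriv ^^ m) (fulcrum p)) t" by simp
  also have "\<dots> = deriv (Phi p m) t"
  proof (rule deriv_cong_ev)
    have "eventually (\<lambda>y. y \<in> {..<0}) (nhds t)"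
      using Suc.prems by (intro eventually_nhds_in_open) auto
    then show "\<forall>\<^sub>F x in nhds t. (deriv ^^ m) (fulcrum p) x = Phi p m x"
      by eventually_elim (use Suc.IH in auto)
  qed simp
  also have "\<dots> = Phi p (Suc m) t"
    by (rule DERIV_imp_deriv[OF Phi_deriv[OF assms Suc.prems]])
  finally show ?case .
qed

lemma Phi_mono:
  assumes "p \<ge> 1" "t \<le> t'" "t' < 0"
  shows "Phi p m t \<le> Phi p m t'"
  using assms(2)
proof (rule DERIV_nonneg_imp_nondecreasing)
  fix x assume "t \<le> x" "x \<le> t'"
  hence "x < 0" using assms by simp
  thus "\<exists>y. DERIV (Phi p m) x :> y \<and> y \<ge> 0"
    using Phi_deriv[OF assms(1) \<open>x < 0\<close>] Phi_nonneg[OF assms(1) \<open>x < 0\<close>] by blast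
qed



lemma powr_shift_aux:
  fixes s P a :: real
  assumes "0 < s" "0 < P"
  shows "P powr (-a) * (s * P) powr a = s powr a"
proof -
  have "(s * P) powr a = s powr a * P powr a" using assms by (simp add: powr_mult)
  moreover have "P powr (-a) * P powr a = 1" using assms by (simp add: powr_add[symmetric])
  ultimately show ?thesis by (simp add: mult_ac)
qed

lemma tauberian:
  fixes g h :: "real \<Rightarrow> real" and a c :: real
  assumes a: "a > 0"
    and der: "\<And>s. s > 0 \<Longrightarrow> (g has_real_derivative - h s) (at s)"
    and mono: "\<And>s s'. 0 < s \<Longrightarrow> s \<le> s' \<Longrightarrow> h s' \<le> h s"
    and lim: "((\<lambda>s. g s * s powr a) \<longlongrightarrow> c) (at_right 0)"
  shows "((\<lambda>s. h s * s powr (a + 1)) \<longlongrightarrow> a * c) (at_right 0)"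
proof (rule tendstoI)
  fix \<epsilon> :: real assume \<epsilon>: "\<epsilon> > 0"
  define G where "G s = g s * s powr a" for s
  define \<eta> where "\<eta> = \<epsilon> / (2 * (\<bar>c\<bar> + 1))"
  have \<eta>: "\<eta> > 0" using \<epsilon> by (simp add: \<eta>_def add_pos_nonneg)
  have c\<eta>: "\<bar>c\<bar> * \<eta> < \<epsilon> / 2"
  proof -
    have "\<bar>c\<bar> * \<eta> = \<epsilon> / 2 * (\<bar>c\<bar> / (\<bar>c\<bar> + 1))" by (simp add: \<eta>_def field_simps)
    also have "\<dots> < \<epsilon> / 2 * 1" using \<epsilon> by (intro mult_strict_left_mono) auto
    finally show ?thesis by simp
  qed
  have q1: "((\<lambda>d. (1 - (1+d) powr (-a)) / d) \<longlongrightarrow> a) (at_right 0)" using a by real_asymp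
  have q2: "((\<lambda>d. ((1-d) powr (-a) - 1) / d) \<longlongrightarrow> a) (at_right 0)" using a by real_asymp
  have lt1: "eventually (\<lambda>d. d < 1) (at_right (0::real))"
    by (auto simp: eventually_at_right_field intro!: exI[of _ 1])
  have "eventually (\<lambda>d. dist ((1 - (1+d) powr (-a)) / d) a < \<eta> \<and> dist (((1-d) powr (-a) - 1) / d) a < \<eta> \<and> d < 1) (at_right 0)"
    using tendstoD[OF q1 \<eta>] tendstoD[OF q2 \<eta>] lt1
    by eventually_elim auto
  then obtain b where b: "b > 0" "\<And>y. 0 < y \<Longrightarrow> y < b \<Longrightarrow>
      dist ((1 - (1+y) powr (-a)) / y) a < \<eta> \<and> dist (((1-y) powr (-a) - 1) / y) a < \<eta> \<and> y < 1"
    unfolding eventually_at_right_field by auto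
  define \<delta> where "\<delta> = b / 2"
  have \<delta>: "0 < \<delta>" "\<delta> < 1" "dist ((1 - (1+\<delta>) powr (-a)) / \<delta>) a < \<eta>"
       "dist (((1-\<delta>) powr (-a) - 1) / \<delta>) a < \<eta>"
    using b(1) b(2)[of \<delta>] by (auto simp: \<delta>_def)
  have resc: "((\<lambda>s. G (s * P)) \<longlongrightarrow> c) (at_right 0)" if P: "P > 0" for P
  proof -
    have "filterlim (\<lambda>s. s * P) (at_right 0) (at_right 0)"
    proof (rule tendsto_imp_filterlim_at_right)
      show "((\<lambda>s. s * P) \<longlongrightarrow> 0) (at_right 0)" by (auto intro!: tendsto_eq_intros)
      show "eventually (\<lambda>s. s * P > 0) (at_right 0)"
        using P by (auto simp: eventually_at_right_field intro: exI[of _ 1])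
    qed
    from filterlim_compose[OF lim[folded G_def] this] show ?thesis by (simp add: o_def)
  qed
  have limG: "(G \<longlongrightarrow> c) (at_right 0)" using lim by (simp add: G_def[abs_def])
  define Lo where "Lo s = (G s - (1+\<delta>) powr (-a) * G (s * (1+\<delta>))) / \<delta>" for s
  define Up where "Up s = ((1-\<delta>) powr (-a) * G (s * (1-\<delta>)) - G s) / \<delta>" for s
  have limLo: "(Lo \<longlongrightarrow> (c - (1+\<delta>) powr (-a) * c) / \<delta>) (at_right 0)"
    unfolding Lo_def[abs_def] using \<delta> by (intro tendsto_intros limG resc) auto
  have limUp: "(Up \<longlongrightarrow> ((1-\<delta>) powr (-a) * c - c) / \<delta>) (at_right 0)"
    unfolding Up_def[abs_def] using \<delta> by (intro tendsto_intros limG resc) auto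
  have d1: "\<bar>(c - (1+\<delta>) powr (-a) * c) / \<delta> - a * c\<bar> < \<epsilon> / 2"
  proof -
    have "(c - (1+\<delta>) powr (-a) * c) / \<delta> - a * c = c * ((1 - (1+\<delta>) powr (-a)) / \<delta> - a)"
      by (simp add: field_simps)
    also have "\<bar>\<dots>\<bar> = \<bar>c\<bar> * \<bar>(1 - (1+\<delta>) powr (-a)) / \<delta> - a\<bar>" by (simp add: abs_mult)
    also have "\<dots> \<le> \<bar>c\<bar> * \<eta>" using \<delta>(3) by (intro mult_left_mono) (auto simp: dist_real_def)
    finally show ?thesis using c\<eta> by linarith
  qed
  have d2: "\<bar>((1-\<delta>) powr (-a) * c - c) / \<delta> - a * c\<bar> < \<epsilon> / 2"
  proof -
    have "((1-\<delta>) powr (-a) * c - c) / \<delta> - a * c = c * (((1-\<delta>) powr (-a) - 1) / \<delta> - a)"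
      by (simp add: field_simps)
    also have "\<bar>\<dots>\<bar> = \<bar>c\<bar> * \<bar>((1-\<delta>) powr (-a) - 1) / \<delta> - a\<bar>" by (simp add: abs_mult)
    also have "\<dots> \<le> \<bar>c\<bar> * \<eta>" using \<delta>(4) by (intro mult_left_mono) (auto simp: dist_real_def)
    finally show ?thesis using c\<eta> by linarith
  qed
  have e2: "\<epsilon> / 2 > 0" using \<epsilon> by simp
  have lower: "Lo s \<le> h s * s powr (a + 1)" if s: "s > 0" for s
  proof -
    have "s < s * (1 + \<delta>)" using s \<delta> by simp
    from MVT2[OF this, of g "\<lambda>x. - h x"] der s obtain z where
      z: "s < z" "z < s * (1+\<delta>)" "g (s * (1+\<delta>)) - g s = (s * (1+\<delta>) - s) * - h z"
      by (metis less_le_trans)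
    have "h z \<le> h s" using mono[of s z] s z by simp
    hence m: "s * \<delta> * h z \<le> s * \<delta> * h s" using s \<delta> by (intro mult_left_mono) auto
    have "g s - g (s * (1+\<delta>)) = s * \<delta> * h z" using z(3) by (simp add: algebra_simps)
    hence "g s - g (s * (1+\<delta>)) \<le> s * \<delta> * h s" using m by linarith
    hence "s powr a * (g s - g (s * (1+\<delta>))) \<le> s powr a * (s * \<delta> * h s)"
      by (intro mult_left_mono) auto
    moreover have "s powr a * (g s - g (s * (1+\<delta>))) = Lo s * \<delta>"
      using powr_shift_aux[OF s, of "1+\<delta>" a] \<delta>
      by (simp add: Lo_def G_def field_simps)
    moreover have "s powr a * (s * \<delta> * h s) = (h s * s powr (a+1)) * \<delta>"
      using s by (simp add: powr_add mult_ac)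
    ultimately show ?thesis using \<delta> by simp
  qed
  have upper: "h s * s powr (a + 1) \<le> Up s" if s: "s > 0" for s
  proof -
    have "s * (1 - \<delta>) < s" using s \<delta> by simp
    from MVT2[OF this, of g "\<lambda>x. - h x"] der s \<delta> obtain z where
      z: "s * (1-\<delta>) < z" "z < s" "g s - g (s * (1-\<delta>)) = (s - s * (1-\<delta>)) * - h z"
      by (smt (verit) mult_pos_pos)
    have z0: "z > 0" using z(1) s \<delta> by (smt (verit) mult_pos_pos)
    have "h s \<le> h z" using mono[of z s] z0 z by simp
    hence m: "s * \<delta> * h s \<le> s * \<delta> * h z" using s \<delta> by (intro mult_left_mono) auto
    have "g (s * (1-\<delta>)) - g s = s * \<delta> * h z" using z(3) by (simp add: algebra_simps)
    hence "s * \<delta> * h s \<le> g (s * (1-\<delta>)) - g s" using m by linarith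
    hence "s powr a * (s * \<delta> * h s) \<le> s powr a * (g (s * (1-\<delta>)) - g s)"
      by (intro mult_left_mono) auto
    moreover have "s powr a * (g (s * (1-\<delta>)) - g s) = Up s * \<delta>"
      using powr_shift_aux[OF s, of "1-\<delta>" a] \<delta>
      by (simp add: Up_def G_def field_simps)
    moreover have "s powr a * (s * \<delta> * h s) = (h s * s powr (a+1)) * \<delta>"
      using s by (simp add: powr_add mult_ac)
    ultimately show ?thesis using \<delta> by simp
  qed
  have "eventually (\<lambda>s. s > 0) (at_right (0::real))" by (simp add: eventually_at_right_less)
  with tendstoD[OF limLo e2] tendstoD[OF limUp e2]
  show "eventually (\<lambda>s. dist (h s * s powr (a + 1)) (a * c) < \<epsilon>) (at_right 0)"
  proof eventually_elim
    case (elim s)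
    with lower[of s] upper[of s] d1 d2 show ?case
      unfolding dist_real_def abs_less_iff by linarith
  qed
qed



lemma riemann_decr:
  fixes f :: "real \<Rightarrow> real"
  assumes cont: "continuous_on {0..} f"
    and nonneg: "\<And>x. 0 \<le> x \<Longrightarrow> 0 \<le> f x"
    and decr: "\<And>x y. 0 \<le> x \<Longrightarrow> x \<le> y \<Longrightarrow> f y \<le> f x"
    and int: "(f has_integral I) {0..}"
    and h: "h > 0"
  shows "summable (\<lambda>j. f (h * real (Suc j)))"
    and "h * (\<Sum>j. f (h * real (Suc j))) \<le> I"
    and "I \<le> h * f 0 + h * (\<Sum>j. f (h * real (Suc j)))"
proof -
  have intI: "\<And>a b. 0 \<le> a \<Longrightarrow> f integrable_on {a..b}"
    by (rule integrable_continuous_interval, rule continuous_on_subset[OF cont]) auto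
  have comb: "integral {0..h * real N} f = (\<Sum>j<N. integral {h * real j..h * real (Suc j)} f)" for N
  proof (induction N)
    case 0 then show ?case by simp
  next
    case (Suc N)
    have "integral {0..h * real (Suc N)} f = integral {0..h * real N} f + integral {h * real N..h * real (Suc N)} f"
      using h by (intro Henstock_Kurzweil_Integration.integral_combine[symmetric] intI) auto
    then show ?case using Suc by simp
  qed
  have piece_lo: "h * f (h * real (Suc j)) \<le> integral {h * real j..h * real (Suc j)} f" for j
  proof -
    have hj: "0 \<le> h * real j" using h by simp
    have le: "h * real j \<le> h * real (Suc j)" using h by (intro mult_left_mono) auto
    have "integral {h * real j..h * real (Suc j)} (\<lambda>_. f (h * real (Suc j))) \<le> integral {h * real j..h * real (Suc j)} f"
      using h hj by (intro integral_le intI) (auto intro!: decr intro: order_trans[OF hj])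
    moreover have "integral {h * real j..h * real (Suc j)} (\<lambda>_. f (h * real (Suc j))) = h * f (h * real (Suc j))"
      using h le by (simp add: content_real del: of_nat_Suc) (simp add: algebra_simps)
    ultimately show ?thesis by linarith
  qed
  have piece_hi: "integral {h * real j..h * real (Suc j)} f \<le> h * f (h * real j)" for j
  proof -
    have hj: "0 \<le> h * real j" using h by simp
    have le: "h * real j \<le> h * real (Suc j)" using h by (intro mult_left_mono) auto
    have "integral {h * real j..h * real (Suc j)} f \<le> integral {h * real j..h * real (Suc j)} (\<lambda>_. f (h * real j))"
      using h hj by (intro integral_le intI) (auto intro!: decr intro: order_trans[OF hj])
    moreover have "integral {h * real j..h * real (Suc j)} (\<lambda>_. f (h * real j)) = h * f (h * real j)"
      using h le by (simp add: content_real del: of_nat_Suc) (simp add: algebra_simps)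
    ultimately show ?thesis by linarith
  qed
  have fint: "f integrable_on {0..}" using int by blast
  have Ieq: "integral {0..} f = I" using int by blast
  have leI: "integral {0..y} f \<le> I" if "0 \<le> y" for y
    using that nonneg by (subst Ieq[symmetric], intro integral_subset_le intI fint) auto
  have part_lo: "h * (\<Sum>j<N. f (h * real (Suc j))) \<le> I" for N
  proof -
    have "h * (\<Sum>j<N. f (h * real (Suc j))) = (\<Sum>j<N. h * f (h * real (Suc j)))"
      by (simp add: sum_distrib_left)
    also have "\<dots> \<le> (\<Sum>j<N. integral {h * real j..h * real (Suc j)} f)"
      by (intro sum_mono piece_lo)
    also have "\<dots> = integral {0..h * real N} f" by (rule comb[symmetric])
    also have "\<dots> \<le> I" using h by (intro leI) auto
    finally show ?thesis .
  qed
  have fn: "0 \<le> f (h * real (Suc j))" for j using h by (intro nonneg) auto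
  show summ: "summable (\<lambda>j. f (h * real (Suc j)))"
  proof (rule bounded_imp_summable[OF fn])
    fix n
    have "h * (\<Sum>j<Suc n. f (h * real (Suc j))) \<le> I" by (rule part_lo)
    hence "(\<Sum>j<Suc n. f (h * real (Suc j))) \<le> I / h" using h by (simp add: field_simps)
    thus "(\<Sum>j\<le>n. f (h * real (Suc j))) \<le> I / h" by (simp add: lessThan_Suc_atMost)
  qed
  have "(\<Sum>j. f (h * real (Suc j))) \<le> I / h"
  proof (rule suminf_le_const[OF summ])
    fix n show "(\<Sum>j<n. f (h * real (Suc j))) \<le> I / h"
      using part_lo[of n] h by (simp add: field_simps)
  qed
  then show "h * (\<Sum>j. f (h * real (Suc j))) \<le> I" using h by (simp add: field_simps)
  define B where "B = h * f 0 + h * (\<Sum>j. f (h * real (Suc j)))"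
  have part_hi: "integral {0..h * real N} f \<le> B" for N
  proof -
    have "integral {0..h * real N} f = (\<Sum>j<N. integral {h * real j..h * real (Suc j)} f)"
      by (rule comb)
    also have "\<dots> \<le> (\<Sum>j<N. h * f (h * real j))" by (intro sum_mono piece_hi)
    also have "\<dots> \<le> (\<Sum>j<Suc N. h * f (h * real j))"
      using h by (intro sum_mono2) (auto intro!: mult_nonneg_nonneg nonneg)
    also have "\<dots> = h * f 0 + (\<Sum>j<N. h * f (h * real (Suc j)))"
      by (subst sum.lessThan_Suc_shift) simp
    also have "(\<Sum>j<N. h * f (h * real (Suc j))) = h * (\<Sum>j<N. f (h * real (Suc j)))"
      by (simp add: sum_distrib_left)
    also have "(\<Sum>j<N. f (h * real (Suc j))) \<le> (\<Sum>j. f (h * real (Suc j)))"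
      by (intro sum_le_suminf summ fn) auto
    finally show ?thesis using h unfolding B_def by (simp add: mult_left_mono)
  qed
  have bound_y: "integral {0..y} f \<le> B" if "0 \<le> y" for y
  proof -
    obtain N :: nat where N: "y / h \<le> real N" using real_arch_simple by blast
    hence "y \<le> h * real N" using h by (simp add: field_simps)
    hence "integral {0..y} f \<le> integral {0..h * real N} f"
      using that nonneg by (intro integral_subset_le intI) auto
    with part_hi[of N] show ?thesis by simp
  qed
  define g where "g n x = (if x \<in> {0..real n} then f x else 0)" for n x
  have g_int: "(g n has_integral (integral {0..real n} f)) {0..}" for n
    unfolding g_def
    by (subst has_integral_restrict) (auto intro: integrable_integral intI)
  have mc: "f integrable_on {0..} \<and> (\<lambda>n. integral {0..} (g n)) \<longlonglongrightarrow> integral {0..} f"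
  proof (intro monotone_convergence_increasing allI ballI)
    fix n show "g n integrable_on {0..}" using g_int by blast
  next
    fix n x assume "x \<in> {0::real..}"
    then show "g n x \<le> g (Suc n) x" using nonneg by (auto simp: g_def)
  next
    fix x :: real assume x: "x \<in> {0..}"
    have "eventually (\<lambda>n. real n \<ge> x) at_top"
      by (meson eventually_sequentiallyI nat_ceiling_le_eq)
    with x have "eventually (\<lambda>n. g n x = f x) at_top"
      by (simp add: eventually_mono g_def)
    thus "(\<lambda>n. g n x) \<longlonglongrightarrow> f x" by (simp add: tendsto_eventually)
  next
    have "norm (integral {0..} (g n)) \<le> I" for n
    proof -
      have e: "integral {0..} (g n) = integral {0..real n} f" using g_int[of n] by (rule integral_unique)
      have "0 \<le> integral {0..real n} f"
        using nonneg by (intro integral_nonneg intI) auto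
      then show ?thesis using e leI[of "real n"] by simp
    qed
    thus "bounded (range (\<lambda>k. integral {0..} (g k)))"
      by (metis (no_types, lifting) boundedI rangeE)
  qed
  have "(\<lambda>n. integral {0..} (g n)) \<longlonglongrightarrow> I" using mc Ieq by simp
  moreover have "\<exists>N. \<forall>n\<ge>N. integral {0..} (g n) \<le> B"
  proof (intro exI allI impI)
    fix n :: nat
    have e: "integral {0..} (g n) = integral {0..real n} f" using g_int[of n] by (rule integral_unique)
    show "integral {0..} (g n) \<le> B" unfolding e by (rule bound_y) simp
  qed
  ultimately show "I \<le> h * f 0 + h * (\<Sum>j. f (h * real (Suc j)))"
    unfolding B_def[symmetric] by (rule LIMSEQ_le_const2)
qed



lemma alg_cov:
  assumes "p \<ge> (1::nat)" "u > (0::real)"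
  shows "\<bar>real p * u ^ (p - 1)\<bar> * ((u ^ p) powr (1 / real p - 1) / exp (u ^ p) / real p) = exp (- (u ^ p))"
proof -
  have p0: "real p > 0" using assms by simp
  have a: "(u ^ p) powr (1 / real p - 1) = u powr (1 - real p)"
  proof -
    have "(u ^ p) powr (1 / real p - 1) = (u powr real p) powr (1 / real p - 1)"
      using assms by (simp add: powr_realpow)
    also have "\<dots> = u powr (real p * (1 / real p - 1))" by (simp add: powr_powr)
    also have "real p * (1 / real p - 1) = 1 - real p" using p0 by (simp add: field_simps)
    finally show ?thesis .
  qed
  have b: "u ^ (p - 1) = u powr (real p - 1)"
    using assms by (simp add: powr_realpow[symmetric] of_nat_diff)
  have c: "u powr (real p - 1) * u powr (1 - real p) = 1"
    using assms by (simp add: powr_add[symmetric])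
  have "\<bar>real p * u ^ (p - 1)\<bar> = real p * u ^ (p - 1)" using assms by simp
  then show ?thesis using c p0 unfolding a b
    by (simp add: exp_minus field_simps)
qed

lemma image_pow_pos:
  assumes "p \<ge> 1"
  shows "(\<lambda>u::real. u ^ p) ` {0<..} = {0<..}"
proof
  show "(\<lambda>u::real. u ^ p) ` {0<..} \<subseteq> {0<..}" by auto
  show "{0<..} \<subseteq> (\<lambda>u::real. u ^ p) ` {0<..}"
  proof
    fix t :: real assume t: "t \<in> {0<..}"
    have "(t powr (1 / real p)) ^ p = (t powr (1 / real p)) powr real p"
      using t by (simp add: powr_realpow)
    also have "\<dots> = t" using t assms by (simp add: powr_powr)
    finally show "t \<in> (\<lambda>u. u ^ p) ` {0<..}" using t by (intro image_eqI[of _ _ "t powr (1 / real p)"]) auto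
  qed
qed

lemma exp_pow_integral:
  assumes p: "p \<ge> 1"
  shows "((\<lambda>u. exp (-(u ^ p))) has_integral Gamma (1 / real p) / real p) {0..}"
proof -
  define F where "F t = t powr (1 / real p - 1) / exp t / real p" for t :: real
  define b where "b = Gamma (1 / real p) / real p"
  have "((\<lambda>t. t powr (1 / real p - 1) / exp t) has_integral Gamma (1 / real p)) {0..}"
    using p by (intro Gamma_integral_real) simp
  hence "(F has_integral b) {0..}"
    unfolding F_def b_def by (rule has_integral_divide)
  moreover have "negligible {x \<in> {0..} - {0<..}. F x \<noteq> 0}"
    by (rule negligible_subset[of "{0}"]) auto
  moreover have "negligible {x \<in> {0<..} - {0..}. F x \<noteq> (0::real)}"
    by (rule negligible_subset[of "{}"]) auto
  ultimately have F0: "(F has_integral b) {0<..}"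
    using has_integral_spike_set_eq by blast
  have Fabs: "F absolutely_integrable_on {0<..}"
    using F0 by (intro nonnegative_absolutely_integrable_1) (auto simp: F_def)
  have leb: "{0::real<..} \<in> sets lebesgue" by (rule sets_completionI_sets) simp
  have der: "((\<lambda>u. u ^ p) has_field_derivative real p * x ^ (p - 1)) (at x within {0<..})" for x :: real
    using DERIV_pow[of p x "{0<..}"] by simp
  have inj: "inj_on (\<lambda>u::real. u ^ p) {0<..}"
    using p by (auto simp: inj_on_def power_eq_iff_eq_base)
  have "F absolutely_integrable_on ((\<lambda>u. u ^ p) ` {0<..}) \<and> integral ((\<lambda>u. u ^ p) ` {0<..}) F = b"
    unfolding image_pow_pos[OF p] using Fabs F0 by blast
  with has_absolute_integral_change_of_variables_1'[OF leb der inj]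
  have "(\<lambda>x. \<bar>real p * x ^ (p - 1)\<bar> * F (x ^ p)) absolutely_integrable_on {0<..} \<and>
        integral {0<..} (\<lambda>x. \<bar>real p * x ^ (p - 1)\<bar> * F (x ^ p)) = b"
    by blast
  hence "((\<lambda>x. \<bar>real p * x ^ (p - 1)\<bar> * F (x ^ p)) has_integral b) {0<..}"
    using absolutely_integrable_on_def integrable_integral by metis
  hence G0: "((\<lambda>u. exp (-(u ^ p))) has_integral b) {0<..}"
    by (rule has_integral_eq[rotated]) (use p alg_cov in \<open>auto simp: F_def\<close>)
  have n1: "negligible {x \<in> {0<..} - {0..}. exp (-(x ^ p)) \<noteq> (0::real)}"
    by (rule negligible_subset[of "{}"]) auto
  have n2: "negligible {x \<in> {0..} - {0<..}. exp (-(x ^ p)) \<noteq> (0::real)}"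
    by (rule negligible_subset[of "{0}"]) auto
  from has_integral_spike_set_eq[OF n1 n2, of b] G0 show ?thesis unfolding b_def by simp
qed



lemma swap_nonneg:
  fixes u :: "nat \<Rightarrow> nat \<Rightarrow> real"
  assumes nn: "\<And>j k. 0 \<le> u j k" and s1: "\<And>j. summable (u j)"
    and s2: "summable (\<lambda>j. \<Sum>k. u j k)"
  shows "(\<lambda>k. \<Sum>j. u j k) sums (\<Sum>j. \<Sum>k. u j k)"
proof -
  define g where "g j = (\<Sum>k. u j k)" for j
  have hj: "((\<lambda>k. u j k) has_sum g j) UNIV" for j
    unfolding g_def by (rule sums_nonneg_imp_has_sum[OF summable_sums[OF s1]]) (rule nn)
  have gnn: "0 \<le> g j" for j unfolding g_def by (intro suminf_nonneg s1 nn)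
  have hg: "(g has_sum (\<Sum>j. g j)) UNIV"
    by (rule sums_nonneg_imp_has_sum[OF summable_sums]) (use s2 gnn in \<open>auto simp: g_def[abs_def]\<close>)
  have sumAB: "(\<lambda>(j,k). u j k) summable_on UNIV \<times> UNIV"
    by (rule summable_on_SigmaI[where g=g]) (use hj hg nn in \<open>auto simp: summable_on_def\<close>)
  have hAB: "((\<lambda>(j,k). u j k) has_sum (\<Sum>j. g j)) (UNIV \<times> UNIV)"
    by (rule has_sum_SigmaI[where g=g]) (use hj hg sumAB in auto)
  have hBA: "((\<lambda>(k,j). u j k) has_sum (\<Sum>j. g j)) (UNIV \<times> UNIV)"
    using hAB by (subst (asm) has_sum_swap) simp
  have sk: "(\<lambda>j. u j k) summable_on UNIV" for k
    using summable_on_SigmaD1[of "\<lambda>k j. u j k" UNIV "\<lambda>_. UNIV" k] hBA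
    by (auto simp: summable_on_def)
  have hk: "((\<lambda>j. u j k) has_sum (\<Sum>j. u j k)) UNIV" for k
  proof -
    have "summable (\<lambda>j. u j k)" using summable_on_UNIV_nonneg_real_iff[of "\<lambda>j. u j k"] sk[of k] nn by simp
    thus ?thesis by (rule sums_nonneg_imp_has_sum[OF summable_sums]) (rule nn)
  qed
  have "((\<lambda>k. \<Sum>j. u j k) has_sum (\<Sum>j. g j)) UNIV"
    by (rule has_sum_Sigma'[OF hBA]) (use hk in simp)
  then show ?thesis unfolding g_def by (rule has_sum_imp_sums)
qed

definition S0 :: "nat \<Rightarrow> real \<Rightarrow> real" where
  "S0 p x = (\<Sum>j. exp (- (x * real (Suc j) ^ p)))"

lemma pow_powr_inv:
  assumes "p \<ge> 1" "x > (0::real)"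
  shows "(x powr (1 / real p)) ^ p = x"
proof -
  have "(x powr (1 / real p)) ^ p = (x powr (1 / real p)) powr real p"
    using assms by (simp add: powr_realpow)
  also have "\<dots> = x" using assms by (simp add: powr_powr)
  finally show ?thesis .
qed

lemma T_bounds:
  assumes p: "p \<ge> 1" and x: "x > 0"
  shows "summable (\<lambda>j. exp (- (x * real (Suc j) ^ p)))"
    and "x powr (1 / real p) * S0 p x \<le> Gamma (1 / real p) / real p"
    and "Gamma (1 / real p) / real p \<le> x powr (1 / real p) + x powr (1 / real p) * S0 p x"
proof -
  define h where "h = x powr (1 / real p)"
  have h: "h > 0" using x by (simp add: h_def)
  define f where "f u = exp (- (u ^ p))" for u :: real
  have eq: "f (h * real (Suc j)) = exp (- (x * real (Suc j) ^ p))" for j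
    unfolding f_def h_def using pow_powr_inv[OF p x] by (simp add: power_mult_distrib)
  have cont: "continuous_on {0..} f" unfolding f_def by (intro continuous_intros)
  have nonneg: "\<And>x. 0 \<le> x \<Longrightarrow> 0 \<le> f x" by (simp add: f_def)
  have decr: "\<And>x y. 0 \<le> x \<Longrightarrow> x \<le> y \<Longrightarrow> f y \<le> f x"
    unfolding f_def by (simp add: power_mono)
  have int: "(f has_integral Gamma (1 / real p) / real p) {0..}"
    unfolding f_def by (rule exp_pow_integral[OF p])
  have f0: "f 0 = 1" using p by (simp add: f_def)
  have R1: "summable (\<lambda>j. f (h * real (Suc j)))"
    by (rule riemann_decr(1)[OF cont nonneg decr int h])
  have R2: "h * (\<Sum>j. f (h * real (Suc j))) \<le> Gamma (1 / real p) / real p"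
    by (rule riemann_decr(2)[OF cont nonneg decr int h])
  have R3: "Gamma (1 / real p) / real p \<le> h * f 0 + h * (\<Sum>j. f (h * real (Suc j)))"
    by (rule riemann_decr(3)[OF cont nonneg decr int h])
  show "summable (\<lambda>j. exp (- (x * real (Suc j) ^ p)))" using R1 unfolding eq .
  show "x powr (1 / real p) * S0 p x \<le> Gamma (1 / real p) / real p"
    unfolding S0_def h_def[symmetric] using R2 unfolding eq .
  show "Gamma (1 / real p) / real p \<le> x powr (1 / real p) + x powr (1 / real p) * S0 p x"
    unfolding S0_def h_def[symmetric] using R3 unfolding eq f0 by simp
qed

lemma S0_nonneg: "0 \<le> S0 p x" if "p \<ge> 1" "x > 0"
  unfolding S0_def by (intro suminf_nonneg T_bounds(1) that) auto

lemma T_lim: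
  assumes p: "p \<ge> 1"
  shows "((\<lambda>x. x powr (1 / real p) * S0 p x) \<longlongrightarrow> Gamma (1 / real p) / real p) (at_right 0)"
proof (rule tendsto_sandwich)
  define I where "I = Gamma (1 / real p) / real p"
  have ev: "eventually (\<lambda>x::real. x > 0) (at_right 0)" by (simp add: eventually_at_right_less)
  show "eventually (\<lambda>x. I - x powr (1 / real p) \<le> x powr (1 / real p) * S0 p x) (at_right 0)"
    using ev by eventually_elim (use T_bounds(3)[OF p] in \<open>force simp: I_def\<close>)
  show "eventually (\<lambda>x. x powr (1 / real p) * S0 p x \<le> I) (at_right 0)"
    using ev by eventually_elim (use T_bounds(2)[OF p] in \<open>force simp: I_def\<close>)
  have "0 < p" using p by simp
  hence "((\<lambda>x::real. x powr (1 / real p)) \<longlongrightarrow> 0) (at_right 0)" by real_asymp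
  from tendsto_diff[OF tendsto_const this, of I]
  show "((\<lambda>x. I - x powr (1 / real p)) \<longlongrightarrow> I) (at_right 0)" by simp
  show "((\<lambda>x. I) \<longlongrightarrow> I) (at_right 0)" by simp
qed



lemma Phi0_sums:
  assumes p: "p \<ge> 1" and s: "s > 0"
  shows "(\<lambda>k. (1 / real (Suc k)) * S0 p (real (Suc k) * s)) sums Phi p 0 (-s)"
proof -
  define u where "u j k = real (Suc k) powr (real 0 - 1) * exp (real (Suc k) * (real (Suc j) ^ p * - s))" for j k
  have neg: "real (Suc j) ^ p * - s < 0" for j using s by (simp add: mult_pos_neg)
  have nn: "0 \<le> u j k" for j k by (simp add: u_def)
  have s1: "summable (u j)" for j unfolding u_def[abs_def] by (rule psi_summable[OF neg])
  have rowsum: "(\<Sum>k. u j k) = (real (Suc j) ^ p) ^ 0 * psi 0 (real (Suc j) ^ p * - s)" for j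
    by (simp add: u_def psi_def)
  have s2: "summable (\<lambda>j. \<Sum>k. u j k)"
    unfolding rowsum using Phi_summable[OF p, of "-s" 0] s by simp
  have colsum: "(\<Sum>j. u j k) = (1 / real (Suc k)) * S0 p (real (Suc k) * s)" for k
  proof -
    have pw: "real (Suc k) powr (real 0 - 1) = 1 / real (Suc k)"
      by (simp add: powr_minus_divide del: of_nat_Suc)
    have "(\<lambda>j. u j k) = (\<lambda>j. (1 / real (Suc k)) * exp (- (real (Suc k) * s * real (Suc j) ^ p)))"
      by (rule ext) (simp only: u_def pw, simp add: algebra_simps)
    moreover have "summable (\<lambda>j. exp (- (real (Suc k) * s * real (Suc j) ^ p)))"
      using s by (intro T_bounds(1)[OF p]) simp
    ultimately show ?thesis by (simp add: S0_def suminf_divide)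
  qed
  have "(\<lambda>k. \<Sum>j. u j k) sums (\<Sum>j. \<Sum>k. u j k)"
    by (rule swap_nonneg[OF nn s1 s2])
  moreover have "(\<Sum>j. \<Sum>k. u j k) = Phi p 0 (-s)" unfolding rowsum Phi_def ..
  ultimately show ?thesis unfolding colsum by simp
qed

lemma resc_at_right:
  assumes "(c::real) > 0"
  shows "filterlim (\<lambda>s. c * s) (at_right 0) (at_right 0)"
proof (rule tendsto_imp_filterlim_at_right)
  show "((\<lambda>s. c * s) \<longlongrightarrow> 0) (at_right 0)" by (auto intro!: tendsto_eq_intros)
  show "eventually (\<lambda>s. c * s > 0) (at_right 0)"
    using assms by (auto simp: eventually_at_right_field intro: exI[of _ 1])
qed

lemma Phi0_lim:
  assumes p: "p \<ge> 1"
  shows "((\<lambda>s. Phi p 0 (-s) * s powr (real 0 + 1 / real p)) \<longlongrightarrow>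
           1 / real p * zeta_real (1 + 1 / real p) * Gamma (real 0 + 1 / real p)) (at_right 0)"
proof -
  define I where "I = Gamma (1 / real p) / real p"
  define e where "e = - 1 - 1 / real p"
  define T where "T x = x powr (1 / real p) * S0 p x" for x
  define a where "a k s = real (Suc k) powr e * T (real (Suc k) * s)" for k s
  have Tb: "0 \<le> T x \<and> T x \<le> I" if "x > 0" for x
    using T_bounds(2)[OF p that] S0_nonneg[OF p that] by (simp add: T_def I_def)
  have eq: "Phi p 0 (-s) * s powr (real 0 + 1 / real p) = (\<Sum>k. a k s)" if s: "s > 0" for s
  proof -
    have "(\<lambda>k. (1 / real (Suc k)) * S0 p (real (Suc k) * s) * s powr (1 / real p)) sums (Phi p 0 (-s) * s powr (1 / real p))"
      by (rule sums_mult2[OF Phi0_sums[OF p s]])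
    moreover have "(1 / real (Suc k)) * S0 p (real (Suc k) * s) * s powr (1 / real p) = a k s" for k
    proof -
      have "real (Suc k) powr e * real (Suc k) powr (1 / real p) = real (Suc k) powr (e + 1 / real p)"
        by (simp add: powr_add)
      also have "e + 1 / real p = - 1" by (simp add: e_def)
      also have "real (Suc k) powr (-1) = 1 / real (Suc k)" by (simp add: powr_minus_divide del: of_nat_Suc)
      finally have *: "real (Suc k) powr e * real (Suc k) powr (1 / real p) = 1 / real (Suc k)" .
      have "a k s = real (Suc k) powr e * (real (Suc k) powr (1 / real p) * s powr (1 / real p)) * S0 p (real (Suc k) * s)"
        using s by (simp add: a_def T_def powr_mult del: of_nat_Suc)
      also have "\<dots> = (real (Suc k) powr e * real (Suc k) powr (1 / real p)) * S0 p (real (Suc k) * s) * s powr (1 / real p)"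
        by (simp only: mult_ac)
      finally show ?thesis unfolding * by simp
    qed
    ultimately show ?thesis by (simp add: sums_iff)
  qed
  have lim_a: "((\<lambda>s. a k s) \<longlongrightarrow> real (Suc k) powr e * I) (at_right 0)" for k
  proof -
    have "((\<lambda>s. T (real (Suc k) * s)) \<longlongrightarrow> I) (at_right 0)"
      using filterlim_compose[OF T_lim[OF p] resc_at_right[of "real (Suc k)"]]
      by (simp add: T_def[abs_def] I_def o_def)
    thus ?thesis unfolding a_def by (intro tendsto_mult tendsto_const)
  qed
  have summ_e: "summable (\<lambda>k. real (Suc k) powr e)"
  proof -
    have "summable (\<lambda>n. real n powr e)" using p by (subst summable_real_powr_iff) (simp add: e_def)
    thus ?thesis by (subst summable_Suc_iff[where f="\<lambda>n. real n powr e"]) 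
  qed
  have bound: "eventually (\<lambda>(k, s). norm (a k s) \<le> real (Suc k) powr e * I) (at_top \<times>\<^sub>F at_right 0)"
    unfolding eventually_prod_filter
  proof (intro exI conjI allI impI)
    show "eventually (\<lambda>_. True) at_top" by simp
    show "eventually (\<lambda>s::real. s > 0) (at_right 0)" by (simp add: eventually_at_right_less)
    fix k :: nat and s :: real assume "True" "s > 0"
    hence "0 \<le> T (real (Suc k) * s) \<and> T (real (Suc k) * s) \<le> I" by (intro Tb) simp
    thus "case (k, s) of (k, s) \<Rightarrow> norm (a k s) \<le> real (Suc k) powr e * I"
      by (simp add: a_def abs_mult mult_left_mono del: of_nat_Suc)
  qed
  have tan: "((\<lambda>s. \<Sum>k. a k s) \<longlongrightarrow> (\<Sum>k. real (Suc k) powr e * I)) (at_right 0)"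
    using tannerys_theorem[OF lim_a bound summable_mult2[OF summ_e]] by simp
  have fe: "(\<lambda>k. real (Suc k) powr e) = (\<lambda>k. 1 / real (Suc k) powr (1 + 1 / real p))"
    by (rule ext) (simp add: e_def powr_minus_divide[symmetric] del: of_nat_Suc)
  have "(\<Sum>k. real (Suc k) powr e * I) = (\<Sum>k. real (Suc k) powr e) * I"
    by (rule suminf_mult2[OF summ_e, symmetric])
  also have "(\<Sum>k. real (Suc k) powr e) = zeta_real (1 + 1 / real p)"
    unfolding fe zeta_real_def ..
  finally have val: "(\<Sum>k. real (Suc k) powr e * I) = 1 / real p * zeta_real (1 + 1 / real p) * Gamma (real 0 + 1 / real p)"
    by (simp add: I_def)
  have ev: "eventually (\<lambda>s. (\<Sum>k. a k s) = Phi p 0 (-s) * s powr (real 0 + 1 / real p)) (at_right 0)"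
    using eventually_at_right_less[of "0::real"] by eventually_elim (rule eq[symmetric])
  show ?thesis using tendsto_cong[OF ev] tan val by simp
qed



lemma Phi_lim:
  assumes p: "p \<ge> 1"
  shows "((\<lambda>s. Phi p m (-s) * s powr (real m + 1 / real p)) \<longlongrightarrow>
           1 / real p * zeta_real (1 + 1 / real p) * Gamma (real m + 1 / real p)) (at_right 0)"
proof (induction m)
  case 0
  then show ?case using Phi0_lim[OF p] by simp
next
  case (Suc m)
  define a where "a = real m + 1 / real p"
  have a0: "a > 0" using p by (simp add: a_def add_nonneg_pos)
  have der: "((\<lambda>s. Phi p m (-s)) has_real_derivative - Phi p (Suc m) (-s)) (at s)" if "s > 0" for s
  proof -
    have "-s < 0" using that by simp
    have D: "((\<lambda>s. Phi p m (-s)) has_real_derivative Phi p (Suc m) (-s) * (-1)) (at s)"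
      by (rule DERIV_chain2[where f="Phi p m" and g="\<lambda>s. -s", OF Phi_deriv[OF p \<open>-s < 0\<close>]])
         (auto intro!: derivative_eq_intros)
    then show ?thesis by simp
  qed
  have mono: "Phi p (Suc m) (-s') \<le> Phi p (Suc m) (-s)" if "0 < s" "s \<le> s'" for s s'
    using that by (intro Phi_mono[OF p]) auto
  have T: "((\<lambda>s. Phi p (Suc m) (-s) * s powr (a + 1)) \<longlongrightarrow>
      a * (1 / real p * zeta_real (1 + 1 / real p) * Gamma a)) (at_right 0)"
    by (rule tauberian[OF a0 der mono Suc.IH[folded a_def]])
  have E1: "a * (1 / real p * zeta_real (1 + 1 / real p) * Gamma a)
      = 1 / real p * zeta_real (1 + 1 / real p) * Gamma (real (Suc m) + 1 / real p)"
  proof -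
    have "a \<notin> \<int>\<^sub>\<le>\<^sub>0" using a0 by (auto elim!: nonpos_Ints_cases)
    hence "Gamma (a + 1) = a * Gamma a" by (rule Gamma_plus1)
    moreover have "a + 1 = real (Suc m) + 1 / real p" by (simp add: a_def)
    ultimately have G: "Gamma (real (Suc m) + 1 / real p) = a * Gamma a" by metis
    show ?thesis unfolding G by (simp only: mult_ac)
  qed
  have E2: "a + 1 = real (Suc m) + 1 / real p" by (simp add: a_def)
  show ?case using T unfolding E1 E2 .
qed

theorem proposition4p2:
  fixes p m :: nat
  assumes "p \<ge> 1"
  shows "(\<lambda>s. (deriv ^^ m) (fulcrum p) (- s)) \<sim>[at_right 0]
         (\<lambda>s. (1 / real p) * zeta_real (1 + 1 / real p) * Gamma (real m + 1 / real p)
               / s powr (real m + 1 / real p))"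
proof (rule asymp_equivI')
  define K where "K = (1 / real p) * zeta_real (1 + 1 / real p) * Gamma (real m + 1 / real p)"
  have zpos: "zeta_real (1 + 1 / real p) > 0"
  proof -
    have "summable (\<lambda>n. real n powr (- (1 + 1 / real p)))"
      using assms by (subst summable_real_powr_iff) simp
    hence "summable (\<lambda>n. real (Suc n) powr (- (1 + 1 / real p)))"
      by (subst summable_Suc_iff[where f="\<lambda>n. real n powr (- (1 + 1 / real p))"])
    hence "summable (\<lambda>n. 1 / real (Suc n) powr (1 + 1 / real p))"
      by (simp add: powr_minus_divide[symmetric] del: of_nat_Suc)
    thus ?thesis unfolding zeta_real_def by (intro suminf_pos) auto
  qed
  have Kpos: "K > 0" unfolding K_def using assms zpos
    by (intro mult_pos_pos Gamma_real_pos) (auto simp: add_nonneg_pos)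
  have L: "((\<lambda>s. Phi p m (-s) * s powr (real m + 1 / real p) / K) \<longlongrightarrow> K / K) (at_right 0)"
    using tendsto_divide[OF Phi_lim[OF assms, of m, folded K_def] tendsto_const[of K]] Kpos by simp
  have ev: "eventually (\<lambda>s. Phi p m (-s) * s powr (real m + 1 / real p) / K =
      (deriv ^^ m) (fulcrum p) (- s) / (K / s powr (real m + 1 / real p))) (at_right 0)"
    using eventually_at_right_less[of "0::real"]
  proof eventually_elim
    case (elim s)
    have "-s < 0" using elim by simp
    then show ?case using Kpos elim by (simp add: deriv_fulcrum[OF assms] field_simps)
  qed
  show "((\<lambda>s. (deriv ^^ m) (fulcrum p) (- s) /
        ((1 / real p) * zeta_real (1 + 1 / real p) * Gamma (real m + 1 / real p) / s powr (real m + 1 / real p)))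
        \<longlongrightarrow> 1) (at_right 0)"
    unfolding K_def[symmetric] using tendsto_cong[OF ev, THEN iffD1, OF L] Kpos by simp
qed


end
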